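(* Let $R$ be a commutative ring and $f,g\in R$. If $\operatorname{Ann}(f)$ and $\operatorname{Ann}(g)$ are pure ideals of $R$, then $\operatorname{Ann}(fg)$ is a pure ideal of $R$.
   Context: An ideal $I$ of $R$ is pure if the canonical map $R\to R/I$ is flat; equivalently, for each $f\in I$ there exists $g\in I$ with $f(1-g)=0$. *)

theory Defs
  imports Main
begin

definition Ann :: "'a::comm_ring_1 \<Rightarrow> 'a set" where
  "Ann f = {x. x * f = 0}"

definition is_ideal :: "'a::comm_ring_1 set \<Rightarrow> bool" where
  "is_ideal I \<longleftrightarrow> 0 \<in> I \<and> (\<forall>x\<in>I. \<forall>y\<in>I. x + y \<in> I) \<and> (\<forall>r. \<forall>x\<in>I. r * x \<in> I)"

text \<open>Pure ideal, via the elementwise characterization given in the paper: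
  for each f in I there is g in I with f(1-g) = 0.\<close>
definition pure_ideal :: "'a::comm_ring_1 set \<Rightarrow> bool" where
  "pure_ideal I \<longleftrightarrow> is_ideal I \<and> (\<forall>f\<in>I. \<exists>g\<in>I. f * (1 - g) = 0)"

end

theory Submission
  imports Defs
begin

lemma ann_ideal: "is_ideal (Ann (f::'a::comm_ring_1))"
  unfolding is_ideal_def Ann_def by (auto simp: algebra_simps)

theorem lemma2p11:
  fixes f g :: "'a::comm_ring_1"
  assumes "pure_ideal (Ann f)" and "pure_ideal (Ann g)"
  shows "pure_ideal (Ann (f * g))"
  unfolding pure_ideal_def
proof (intro conjI ann_ideal ballI)
  fix x assume "x \<in> Ann (f * g)"
  hence x: "x * f * g = 0" by (simp add: Ann_def mult.assoc)
  have "x * g \<in> Ann f" using x by (simp add: Ann_def algebra_simps)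
  then obtain a where a: "a * f = 0" "x * g * (1 - a) = 0"
    using assms(1) unfolding pure_ideal_def Ann_def by blast
  have "x * (1 - a) \<in> Ann g" using a(2) by (simp add: Ann_def algebra_simps)
  then obtain b where b: "b * g = 0" "x * (1 - a) * (1 - b) = 0"
    using assms(2) unfolding pure_ideal_def Ann_def by blast
  define h where "h = 1 - (1 - a) * (1 - b)"
  have "h * (f * g) = 0"
  proof -
    have "h * (f * g) = (a * f) * g + (b * g) * f - (a * f) * (b * g)"
      unfolding h_def by (simp add: algebra_simps)
    thus ?thesis using a(1) b(1) by simp
  qed
  moreover have "x * (1 - h) = 0" using b(2) unfolding h_def by (simp add: algebra_simps)
  ultimately show "\<exists>h\<in>Ann (f * g). x * (1 - h) = 0" by (auto simp: Ann_def)
qed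

end
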